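(* Let $\mathcal{G}=(\mathcal{P},\mathcal{L})$ be a Fischer space, let $R$ be a commutative ring with $2=0$ and let $A=M_R(\mathcal{G},1)$. For each point $x\in\mathcal{P}$, the operator $\operatorname{ad}_x\colon A\to A$, $v\mapsto xv$, is nilpotent; more precisely $\operatorname{ad}_x^2=0$.
   Context: A 3-transposition group is a pair $(G,D)$ where $D$ is a conjugacy class of involutions generating $G$ with $de$ of order at most $3$ for all $d,e\in D$. Its Fischer space $\mathcal{G}=(\mathcal{P},\mathcal{L})$ has $\mathcal{P}=D$ and as lines the $3$-subsets consisting of the three involutions of a subgroup isomorphic to $\mathrm{Sym}(3)$. Distinct points on a common line are collinear ($p\sim q$), and $p\wedge q$ is the third point of that line. The nilpotent Matsuo algebra $A=M_R(\mathcal{G},1)$ is the free $R$-module with basis $\mathcal{P}$ and commutative bilinear product $p\cdot q=0$ if $p=q$ or $p\not\sim q$, $p\cdot q=p+q+p\wedge q$ if $p\sim q$. *)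

theory Defs
  imports "HOL-Algebra.Sym_Groups" "HOL-Algebra.Generated_Groups" "HOL-Library.Function_Algebras"
begin

definition three_transposition_group :: "('g, 'b) monoid_scheme \<Rightarrow> 'g set \<Rightarrow> bool" where
  "three_transposition_group G D \<longleftrightarrow>
     group G \<and> D \<subseteq> carrier G \<and>
     (\<exists>d\<in>carrier G. D = {g \<otimes>\<^bsub>G\<^esub> d \<otimes>\<^bsub>G\<^esub> inv\<^bsub>G\<^esub> g | g. g \<in> carrier G}) \<and>
     (\<forall>d\<in>D. d \<noteq> \<one>\<^bsub>G\<^esub> \<and> d \<otimes>\<^bsub>G\<^esub> d = \<one>\<^bsub>G\<^esub>) \<and>
     generate G D = carrier G \<and>
     (\<forall>d\<in>D. \<forall>e\<in>D. \<exists>n::nat. 0 < n \<and> n \<le> 3 \<and> (d \<otimes>\<^bsub>G\<^esub> e) [^]\<^bsub>G\<^esub> n = \<one>\<^bsub>G\<^esub>)"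

definition fischer_line :: "('g, 'b) monoid_scheme \<Rightarrow> 'g set \<Rightarrow> 'g set \<Rightarrow> bool" where
  "fischer_line G D L \<longleftrightarrow> L \<subseteq> D \<and> card L = 3 \<and>
     (\<exists>H. subgroup H G \<and> (G\<lparr>carrier := H\<rparr>) \<cong> sym_group 3 \<and>
          L = {h \<in> H. h \<noteq> \<one>\<^bsub>G\<^esub> \<and> h \<otimes>\<^bsub>G\<^esub> h = \<one>\<^bsub>G\<^esub>})"

definition fischer_collinear :: "('g, 'b) monoid_scheme \<Rightarrow> 'g set \<Rightarrow> 'g \<Rightarrow> 'g \<Rightarrow> bool" where
  "fischer_collinear G D p q \<longleftrightarrow> p \<noteq> q \<and> (\<exists>L. fischer_line G D L \<and> p \<in> L \<and> q \<in> L)"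

definition fischer_wedge :: "('g, 'b) monoid_scheme \<Rightarrow> 'g set \<Rightarrow> 'g \<Rightarrow> 'g \<Rightarrow> 'g" where
  "fischer_wedge G D p q =
     (THE r. \<exists>L. fischer_line G D L \<and> L = {p, q, r} \<and> r \<noteq> p \<and> r \<noteq> q)"

text \<open>Elements of the free R-module with basis D: finitely supported functions D -> R.\<close>
definition matsuo_carrier :: "'g set \<Rightarrow> ('g \<Rightarrow> 'r::comm_ring_1) set" where
  "matsuo_carrier D = {v. finite {p. v p \<noteq> 0} \<and> {p. v p \<noteq> 0} \<subseteq> D}"

definition basis_vec :: "'g \<Rightarrow> ('g \<Rightarrow> 'r::comm_ring_1)" where
  "basis_vec p = (\<lambda>r. if r = p then 1 else 0)"

definition matsuo_basis_prod :: "('g, 'b) monoid_scheme \<Rightarrow> 'g set \<Rightarrow> 'g \<Rightarrow> 'g \<Rightarrow> ('g \<Rightarrow> 'r::comm_ring_1)" where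
  "matsuo_basis_prod G D p q =
     (if fischer_collinear G D p q
      then basis_vec p + basis_vec q + basis_vec (fischer_wedge G D p q)
      else 0)"

definition matsuo_mult :: "('g, 'b) monoid_scheme \<Rightarrow> 'g set \<Rightarrow> ('g \<Rightarrow> 'r::comm_ring_1) \<Rightarrow> ('g \<Rightarrow> 'r) \<Rightarrow> ('g \<Rightarrow> 'r)" where
  "matsuo_mult G D u v =
     (\<Sum>p\<in>{p. u p \<noteq> 0}. \<Sum>q\<in>{q. v q \<noteq> 0}. (\<lambda>r. u p * v q * matsuo_basis_prod G D p q r))"

definition matsuo_ad :: "('g, 'b) monoid_scheme \<Rightarrow> 'g set \<Rightarrow> 'g \<Rightarrow> ('g \<Rightarrow> 'r::comm_ring_1) \<Rightarrow> ('g \<Rightarrow> 'r)" where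
  "matsuo_ad G D x v = matsuo_mult G D (basis_vec x) v"

end

theory Submission
  imports Defs
begin

lemma (in group) klein_sub:
  assumes a: "a \<in> carrier G" and b: "b \<in> carrier G"
    and aa: "a \<otimes> a = \<one>" and bb: "b \<otimes> b = \<one>" and ab: "a \<otimes> b = b \<otimes> a"
  shows "subgroup {\<one>, a, b, a \<otimes> b} G"
proof -
  have abab: "(a \<otimes> b) \<otimes> (a \<otimes> b) = \<one>"
    by (metis a b aa bb ab m_assoc m_closed r_one)
  have c1: "a \<otimes> (a \<otimes> b) = b" by (metis a b aa m_assoc l_one)
  have c2: "(a \<otimes> b) \<otimes> a = b" by (metis a b aa ab m_assoc r_one)
  have c3: "b \<otimes> (a \<otimes> b) = a" by (metis a b bb ab m_assoc r_one)
  have c4: "(a \<otimes> b) \<otimes> b = a" by (metis a b bb m_assoc r_one)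
  have inva: "inv a = a" using aa a by (simp add: inv_equality)
  have invb: "inv b = b" using bb b by (simp add: inv_equality)
  have invab: "inv (a \<otimes> b) = a \<otimes> b" using abab a b by (simp add: inv_equality)
  show ?thesis
  proof (rule subgroupI)
    show "{\<one>, a, b, a \<otimes> b} \<subseteq> carrier G" using a b by auto
    show "{\<one>, a, b, a \<otimes> b} \<noteq> {}" by auto
    fix x assume "x \<in> {\<one>, a, b, a \<otimes> b}"
    then show "inv x \<in> {\<one>, a, b, a \<otimes> b}" using inva invb invab by auto
  next
    fix x y assume "x \<in> {\<one>, a, b, a \<otimes> b}" "y \<in> {\<one>, a, b, a \<otimes> b}"
    then show "x \<otimes> y \<in> {\<one>, a, b, a \<otimes> b}"
      apply (elim insertE emptyE)
      using a b by (simp_all add: aa bb abab c1 c2 c3 c4 ab[symmetric])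
  qed
qed

lemma (in group) no_commuting_invol:
  assumes H: "subgroup H G" and cH: "card H = 6"
    and a: "a \<in> H" and b: "b \<in> H" and ne: "a \<noteq> b" and a1: "a \<noteq> \<one>" and b1: "b \<noteq> \<one>"
    and aa: "a \<otimes> a = \<one>" and bb: "b \<otimes> b = \<one>" and ab: "a \<otimes> b = b \<otimes> a"
  shows False
proof -
  have ac: "a \<in> carrier G" and bc: "b \<in> carrier G" using a b H subgroup.subset by auto
  let ?S = "{\<one>, a, b, a \<otimes> b}"
  have S: "subgroup ?S G" using klein_sub[OF ac bc aa bb ab] .
  have SH: "?S \<subseteq> H" using a b H by (auto intro: subgroup.m_closed subgroup.one_closed)
  have c1: "a \<otimes> (a \<otimes> b) = b" by (metis ac bc aa m_assoc l_one)
  have ab1: "a \<otimes> b \<noteq> \<one>" using ac c1 ne by force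
  have aba: "a \<otimes> b \<noteq> a" using ac bc b1 by simp
  have abb: "a \<otimes> b \<noteq> b" using ac bc a1 by simp
  have cS: "card ?S = 4" using ab1 aba abb a1 b1 ne by auto
  have KS: "subgroup ?S (G\<lparr>carrier := H\<rparr>)" using subgroup_incl[OF S H SH] .
  interpret K: group "G\<lparr>carrier := H\<rparr>" using subgroup.subgroup_is_group[OF H] is_group by blast
  have "card (rcosets\<^bsub>G\<lparr>carrier := H\<rparr>\<^esub> ?S) * card ?S = order (G\<lparr>carrier := H\<rparr>)"
    using K.lagrange[OF KS] .
  then have "card (rcosets\<^bsub>G\<lparr>carrier := H\<rparr>\<^esub> ?S) * 4 = 6" using cS cH by (simp add: order_def)
  then show False by presburger
qed

lemma (in group) line_struct:
  assumes L: "fischer_line G D L" and a: "a \<in> L" and b: "b \<in> L" and ne: "a \<noteq> b"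
  shows "L = {a, b, a \<otimes> b \<otimes> a} \<and> a \<otimes> b \<otimes> a \<noteq> a \<and> a \<otimes> b \<otimes> a \<noteq> b"
proof -
  obtain H where H: "subgroup H G" and iso: "G\<lparr>carrier := H\<rparr> \<cong> sym_group 3"
    and LH: "L = {h \<in> H. h \<noteq> \<one> \<and> h \<otimes> h = \<one>}" and c3: "card L = 3"
    using L unfolding fischer_line_def by auto
  have cH: "card H = 6" using iso_same_card[OF iso] sym_group_card_carrier[of 3]
    by (simp add: fact_numeral)
  have aH: "a \<in> H" and a1: "a \<noteq> \<one>" and aa: "a \<otimes> a = \<one>" using a LH by auto
  have bH: "b \<in> H" and b1: "b \<noteq> \<one>" and bb: "b \<otimes> b = \<one>" using b LH by auto
  have ac: "a \<in> carrier G" and bc: "b \<in> carrier G" using aH bH H subgroup.subset by auto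
  define c where "c = a \<otimes> b \<otimes> a"
  have cH': "c \<in> H" unfolding c_def using aH bH H by (auto intro: subgroup.m_closed)
  have cc: "c \<in> carrier G" unfolding c_def using ac bc by auto
  have ccc: "c \<otimes> c = \<one>" unfolding c_def using ac bc aa bb
    by (metis m_assoc m_closed r_one)
  have inva: "inv a = a" using aa ac by (simp add: inv_equality)
  have c1: "c \<noteq> \<one>"
  proof
    assume "c = \<one>"
    then have "a \<otimes> b \<otimes> a \<otimes> a = a" unfolding c_def using ac by simp
    then have "a \<otimes> b = a" using ac bc aa by (metis m_assoc m_closed r_one)
    then show False using ac bc b1 by simp
  qed
  have ca: "c \<noteq> a"
  proof
    assume "c = a"
    then have "a \<otimes> b \<otimes> a \<otimes> a = a \<otimes> a" unfolding c_def by simp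
    then have "a \<otimes> b = \<one>" using ac bc aa by (metis m_assoc m_closed r_one)
    then have "a \<otimes> (a \<otimes> b) = a" using ac by simp
    then have "b = a" using ac bc aa by (metis m_assoc l_one)
    then show False using ne by simp
  qed
  have cb: "c \<noteq> b"
  proof
    assume "c = b"
    then have "a \<otimes> b \<otimes> a \<otimes> a = b \<otimes> a" unfolding c_def by simp
    then have "a \<otimes> b = b \<otimes> a" using ac bc aa by (metis m_assoc m_closed r_one)
    then show False using no_commuting_invol[OF H cH aH bH ne a1 b1 aa bb] by blast
  qed
  have cL: "c \<in> L" using LH cH' c1 ccc by auto
  have fin: "finite L" using c3 card.infinite by fastforce
  have sub: "{a, b, c} \<subseteq> L" using a b cL by auto
  have "card {a, b, c} = 3" using ne ca cb by auto
  then have "{a, b, c} = L" using card_subset_eq[OF fin sub] c3 by simp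
  then show ?thesis using ca cb unfolding c_def by auto
qed

lemma wedge_eq:
  assumes g: "group G" and L: "fischer_line G D L" and LL: "L = {p, q, r}"
    and rp: "r \<noteq> p" and rq: "r \<noteq> q" and pq: "p \<noteq> q"
  shows "fischer_wedge G D p q = r"
  unfolding fischer_wedge_def
proof (rule the_equality)
  show "\<exists>L. fischer_line G D L \<and> L = {p, q, r} \<and> r \<noteq> p \<and> r \<noteq> q" using L LL rp rq by blast
  have r: "r = p \<otimes>\<^bsub>G\<^esub> q \<otimes>\<^bsub>G\<^esub> p" using group.line_struct[OF g L, of p q] LL pq rp rq by auto
  fix r' assume "\<exists>L. fischer_line G D L \<and> L = {p, q, r'} \<and> r' \<noteq> p \<and> r' \<noteq> q"
  then obtain L' where L': "fischer_line G D L'" "L' = {p, q, r'}" "r' \<noteq> p" "r' \<noteq> q" by blast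
  then have "r' = p \<otimes>\<^bsub>G\<^esub> q \<otimes>\<^bsub>G\<^esub> p" using group.line_struct[OF g L'(1), of p q] pq by auto
  then show "r' = r" using r by simp
qed

lemma sum_fun_app: "(\<Sum>a\<in>A. f a) r = (\<Sum>a\<in>A. f a r)"
  by (induction A rule: infinite_finite_induct) auto

lemma ad_formula:
  fixes u :: "'g \<Rightarrow> 'r::comm_ring_1"
  assumes fin: "finite S" and sub: "{q. u q \<noteq> 0} \<subseteq> S"
  shows "matsuo_ad G D x u r = (\<Sum>q\<in>S. u q * matsuo_basis_prod G D x q r)"
proof (cases "(1::'r) = 0")
  case True
  then have "\<And>a::'r. a = 0" by (metis mult_1 mult_zero_left)
  then show ?thesis by metis
next
  case False
  then have bx: "{p. (basis_vec x :: 'g \<Rightarrow> 'r) p \<noteq> 0} = {x}" by (auto simp: basis_vec_def)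
  have "matsuo_ad G D x u r = (\<Sum>q\<in>{q. u q \<noteq> 0}. u q * matsuo_basis_prod G D x q r)"
    unfolding matsuo_ad_def matsuo_mult_def bx by (simp add: sum_fun_app basis_vec_def)
  also have "\<dots> = (\<Sum>q\<in>S. u q * matsuo_basis_prod G D x q r)"
    by (rule sum.mono_neutral_left[OF fin sub]) auto
  finally show ?thesis .
qed

lemma collinear_struct:
  assumes g: "group G" and c: "fischer_collinear G D x q"
  shows "\<exists>w. w \<noteq> x \<and> w \<noteq> q \<and> x \<noteq> q \<and> fischer_wedge G D x q = w \<and>
            fischer_collinear G D x w \<and> fischer_wedge G D x w = q"
proof -
  obtain L where L: "fischer_line G D L" "x \<in> L" "q \<in> L" and xq: "x \<noteq> q"
    using c unfolding fischer_collinear_def by blast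
  define w where "w = x \<otimes>\<^bsub>G\<^esub> q \<otimes>\<^bsub>G\<^esub> x"
  have LL: "L = {x, q, w}" "w \<noteq> x" "w \<noteq> q" using group.line_struct[OF g L xq] unfolding w_def by auto
  have "fischer_wedge G D x q = w" using wedge_eq[OF g L(1) LL(1)] LL xq by auto
  moreover have "fischer_wedge G D x w = q" using wedge_eq[OF g L(1), of x w q] LL xq by auto
  moreover have "fischer_collinear G D x w" unfolding fischer_collinear_def using L LL by auto
  ultimately show ?thesis using LL xq by blast
qed

lemma bp_self: "matsuo_basis_prod G D x x = 0"
  by (simp add: matsuo_basis_prod_def fischer_collinear_def)

lemma supp_bp: "{t. (matsuo_basis_prod G D x q :: 'g \<Rightarrow> 'r::comm_ring_1) t \<noteq> 0} \<subseteq> {x, q, fischer_wedge G D x q}"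
  by (auto simp: matsuo_basis_prod_def basis_vec_def split: if_splits)

lemma ad_bp_zero:
  assumes g: "group G" and two: "(2::'r::comm_ring_1) = 0"
    and fin: "finite T" and sub: "{x, q, fischer_wedge G D x q} \<subseteq> T"
  shows "(\<Sum>t\<in>T. (matsuo_basis_prod G D x q t :: 'r) * matsuo_basis_prod G D x t r) = 0"
proof (cases "fischer_collinear G D x q")
  case False
  then show ?thesis by (simp add: matsuo_basis_prod_def)
next
  case True
  obtain w where w: "w \<noteq> x" "w \<noteq> q" "x \<noteq> q" "fischer_wedge G D x q = w"
    "fischer_collinear G D x w" "fischer_wedge G D x w = q"
    using collinear_struct[OF g True] by blast
  have "(\<Sum>t\<in>T. (matsuo_basis_prod G D x q t :: 'r) * matsuo_basis_prod G D x t r)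
      = (\<Sum>t\<in>{x, q, w}. (matsuo_basis_prod G D x q t :: 'r) * matsuo_basis_prod G D x t r)"
  proof (rule sum.mono_neutral_right[OF fin])
    show "{x, q, w} \<subseteq> T" using sub w by auto
    show "\<forall>i\<in>T - {x, q, w}. (matsuo_basis_prod G D x q i :: 'r) * matsuo_basis_prod G D x i r = 0"
    proof
      fix i assume "i \<in> T - {x, q, w}"
      then have "(matsuo_basis_prod G D x q i :: 'r) = 0" using supp_bp[of G D x q] w by blast
      then show "(matsuo_basis_prod G D x q i :: 'r) * matsuo_basis_prod G D x i r = 0" by simp
    qed
  qed
  also have "\<dots> = (matsuo_basis_prod G D x q r :: 'r) + matsuo_basis_prod G D x w r"
    using w True by (simp add: bp_self) (simp add: matsuo_basis_prod_def basis_vec_def)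
  also have "\<dots> = 2 * (matsuo_basis_prod G D x q r)"
    using w True by (simp add: matsuo_basis_prod_def basis_vec_def)
  finally show ?thesis using two by simp
qed

theorem proposition5p3:
  fixes G :: "('g, 'b) monoid_scheme" and D :: "'g set" and x :: 'g
  assumes "three_transposition_group G D"
    and "(2::'r::comm_ring_1) = 0"
    and "x \<in> D"
  shows "\<forall>v \<in> (matsuo_carrier D :: ('g \<Rightarrow> 'r) set).
           (matsuo_ad G D x ^^ 2) v = 0"
proof
  fix v :: "'g \<Rightarrow> 'r" assume v: "v \<in> matsuo_carrier D"
  have g: "group G" using assms(1) unfolding three_transposition_group_def by blast
  define S where "S = {q. v q \<noteq> 0}"
  have finS: "finite S" using v unfolding S_def matsuo_carrier_def by auto
  define bp where "bp = (matsuo_basis_prod G D x :: 'g \<Rightarrow> 'g \<Rightarrow> 'r)"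
  define f where "f = matsuo_ad G D x v"
  have f: "f t = (\<Sum>q\<in>S. v q * bp q t)" for t
    unfolding f_def bp_def by (rule ad_formula[OF finS]) (auto simp: S_def)
  define T where "T = insert x (S \<union> (\<lambda>q. fischer_wedge G D x q) ` S)"
  have finT: "finite T" using finS unfolding T_def by auto
  have suppf: "{t. f t \<noteq> 0} \<subseteq> T"
  proof
    fix t assume "t \<in> {t. f t \<noteq> 0}"
    then have "(\<Sum>q\<in>S. v q * bp q t) \<noteq> 0" using f by simp
    then have "\<exists>q\<in>S. v q * bp q t \<noteq> 0" by (meson sum.neutral)
    then obtain q where q: "q \<in> S" "bp q t \<noteq> 0" by (metis mult_zero_right)
    then have "t \<in> {x, q, fischer_wedge G D x q}" using supp_bp[of G D x q] unfolding bp_def by auto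
    then show "t \<in> T" using q unfolding T_def by auto
  qed
  have "(matsuo_ad G D x ^^ 2) v = matsuo_ad G D x f"
    by (simp add: f_def numeral_2_eq_2)
  moreover have "matsuo_ad G D x f r = 0" for r
  proof -
    have "matsuo_ad G D x f r = (\<Sum>t\<in>T. f t * bp t r)"
      unfolding bp_def by (rule ad_formula[OF finT suppf])
    also have "\<dots> = (\<Sum>t\<in>T. \<Sum>q\<in>S. v q * (bp q t * bp t r))"
      by (simp add: f sum_distrib_right mult.assoc)
    also have "\<dots> = (\<Sum>q\<in>S. v q * (\<Sum>t\<in>T. bp q t * bp t r))"
      by (subst sum.swap) (simp add: sum_distrib_left)
    also have "\<dots> = 0"
    proof (rule sum.neutral, rule ballI)
      fix q assume "q \<in> S"
      then have "{x, q, fischer_wedge G D x q} \<subseteq> T" unfolding T_def by auto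
      then show "v q * (\<Sum>t\<in>T. bp q t * bp t r) = 0"
        using ad_bp_zero[OF g assms(2) finT] unfolding bp_def by simp
    qed
    finally show ?thesis .
  qed
  ultimately show "(matsuo_ad G D x ^^ 2) v = 0" by auto
qed

end
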